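(* Let $M$ be a matroid, $\Gamma$ an ordered abelian group, $\psi\colon E(M)\to\Gamma$ a labeling, $F\subseteq\Gamma$ finite, and $B$ a basis of $M$. If $M$ has an $F$-avoiding basis, then it has an $F$-avoiding basis $B^*$ with $|B^*\setminus B|\le|F|$.
   Context: An abelian group $\Gamma$ is ordered if it carries a total order $\le$ such that $a\le b$ implies $a+c\le b+c$ for all $a,b,c$. $\psi(S):=\sum_{x\in S}\psi(x)$; a basis $B$ is $F$-avoiding if $\psi(B)\notin F$. *)

theory Defs
  imports Main
begin

definition matroid :: "'a set \<Rightarrow> ('a set \<Rightarrow> bool) \<Rightarrow> bool" where
  "matroid E indep \<longleftrightarrow>
     finite E \<and>
     indep {} \<and>
     (\<forall>X. indep X \<longrightarrow> X \<subseteq> E) \<and>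
     (\<forall>X Y. indep X \<and> Y \<subseteq> X \<longrightarrow> indep Y) \<and>
     (\<forall>X Y. indep X \<and> indep Y \<and> card X < card Y \<longrightarrow>
        (\<exists>y \<in> Y - X. indep (insert y X)))"

definition basis :: "'a set \<Rightarrow> ('a set \<Rightarrow> bool) \<Rightarrow> 'a set \<Rightarrow> bool" where
  "basis E indep B \<longleftrightarrow> indep B \<and> (\<forall>X. indep X \<and> B \<subseteq> X \<longrightarrow> X = B)"

definition avoiding :: "('a \<Rightarrow> 'g::ab_group_add) \<Rightarrow> 'g set \<Rightarrow> 'a set \<Rightarrow> bool" where
  "avoiding psi F B \<longleftrightarrow> (\<Sum>x\<in>B. psi x) \<notin> F"

end

theory Submission
  imports Defs
begin


lemma sum_swap:
  fixes f :: "'a \<Rightarrow> 'g::ab_group_add"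
  assumes "finite X" "x \<in> X" "y \<notin> X - {x}"
  shows "sum f (insert y (X - {x})) = sum f X - f x + f y"
  using assms by (simp add: sum_diff1 algebra_simps)

locale mat =
  fixes E :: "'a set" and indep :: "'a set \<Rightarrow> bool"
  assumes M: "matroid E indep"
begin

abbreviation bas where "bas B \<equiv> basis E indep B"

lemma indep_sub: "indep X \<Longrightarrow> X \<subseteq> E" using M unfolding matroid_def by blast
lemma finE: "finite E" using M unfolding matroid_def by blast
lemma indep_fin: "indep X \<Longrightarrow> finite X" using indep_sub finE finite_subset by blast
lemma indep_mono: "indep X \<Longrightarrow> Y \<subseteq> X \<Longrightarrow> indep Y" using M unfolding matroid_def by blast
lemma aug: "indep X \<Longrightarrow> indep Y \<Longrightarrow> card X < card Y \<Longrightarrow> \<exists>y\<in>Y-X. indep (insert y X)"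
  using M unfolding matroid_def by blast

lemma bas_indep: "bas B \<Longrightarrow> indep B" by (simp add: basis_def)
lemma bas_fin: "bas B \<Longrightarrow> finite B" using bas_indep indep_fin by blast

lemma bas_max: assumes "bas B" "indep X" shows "card X \<le> card B"
proof (rule ccontr)
  assume "\<not> card X \<le> card B"
  then obtain y where y: "y \<in> X - B" "indep (insert y B)" using aug[of B X] assms bas_indep by force
  then have "insert y B = B" using assms(1) unfolding basis_def by blast
  with y show False by blast
qed

lemma bas_card: "bas A \<Longrightarrow> bas B \<Longrightarrow> card A = card B" using bas_max bas_indep le_antisym by metis

lemma bas_by_card: assumes "bas B" "indep Z" "card B \<le> card Z" shows "bas Z"
  unfolding basis_def
proof (intro conjI allI impI)
  show "indep Z" by fact
  fix W assume W: "indep W \<and> Z \<subseteq> W"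
  have "card W \<le> card B" using bas_max assms(1) W by blast
  then have "card W \<le> card Z" using assms(3) by linarith
  then show "W = Z" using card_seteq[of W Z] W indep_fin by blast
qed

lemma aug_size: "indep A \<Longrightarrow> indep B \<Longrightarrow> card A \<le> card B \<Longrightarrow> \<exists>I. indep I \<and> A \<subseteq> I \<and> I \<subseteq> A \<union> B \<and> card I = card B"
proof (induction "card B - card A" arbitrary: A rule: less_induct)
  case less
  show ?case
  proof (cases "card A = card B")
    case True then show ?thesis using less.prems by blast
  next
    case False
    then have lt: "card A < card B" using less.prems by linarith
    then obtain y where y: "y \<in> B - A" "indep (insert y A)" using aug less.prems by blast
    have fA: "finite A" using indep_fin less.prems by blast
    have c: "card (insert y A) = Suc (card A)" using y fA by simp
    have "card B - card (insert y A) < card B - card A" using c lt by simp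
    moreover have "card (insert y A) \<le> card B" using c lt by simp
    ultimately obtain I where "indep I" "insert y A \<subseteq> I" "I \<subseteq> insert y A \<union> B" "card I = card B"
      using less.hyps y(2) less.prems(2) by blast
    then show ?thesis using y by blast
  qed
qed

lemma aug_basis: assumes "indep A" "bas B" shows "\<exists>Z. bas Z \<and> A \<subseteq> Z \<and> Z \<subseteq> A \<union> B"
proof -
  have "card A \<le> card B" using bas_max assms by blast
  then obtain I where I: "indep I" "A \<subseteq> I" "I \<subseteq> A \<union> B" "card I = card B"
    using aug_size assms bas_indep by blast
  then have "bas I" using bas_by_card assms(2) by simp
  then show ?thesis using I by blast
qed

lemma cl_trans:
  assumes J: "indep J" and A: "indep A" and cl: "\<forall>a\<in>A. a \<in> J \<or> \<not> indep (insert a J)"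
    and yJ: "y \<notin> J" and Jy: "indep (insert y J)"
  shows "indep (insert y A)"
proof -
  have noaug: "\<not> card J < card I" if iI: "indep I" and sI: "I \<subseteq> A \<union> J" for I
  proof
    assume "card J < card I"
    then obtain i where "i \<in> I - J" "indep (insert i J)" using aug J iI by blast
    then show False using cl sI by blast
  qed
  have fJ: "finite J" using indep_fin J by blast
  have cJy: "card (insert y J) = Suc (card J)" using yJ fJ by simp
  have "card A \<le> card J" using noaug[of A] A by force
  then have "card A \<le> card (insert y J)" using cJy by simp
  then obtain I where I: "indep I" "A \<subseteq> I" "I \<subseteq> A \<union> insert y J" "card I = card (insert y J)"
    using aug_size A Jy by blast
  have "y \<in> I"
  proof (rule ccontr)
    assume "y \<notin> I"
    then have "I \<subseteq> A \<union> J" using I(3) by blast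
    then show False using noaug[of I] I(1) I(4) cJy by simp
  qed
  then have "insert y A \<subseteq> I" using I(2) by blast
  then show ?thesis using indep_mono I(1) by blast
qed

end


context mat begin

lemma Xloc:
  fixes psi :: "'a \<Rightarrow> 'g::linordered_ab_group_add"
  assumes bX: "bas X" and bY: "bas Y"
    and uniq: "\<forall>D. bas D \<and> X\<inter>Y \<subseteq> D \<and> D \<subseteq> X\<union>Y \<and> sum psi D = sum psi X \<longrightarrow> D = X"
    and eX: "e \<in> X - Y" and emax: "\<forall>u \<in> (X\<union>Y) - (X\<inter>Y). psi u \<le> psi e"
    and bD: "bas D" and SD: "X\<inter>Y \<subseteq> D" and DU: "D \<subseteq> X \<union> Y" and eD: "e \<in> D"
  shows "\<exists>z \<in> (X\<union>Y) - D. psi z < psi e \<and> bas (insert z (D - {e}))"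
proof (rule ccontr)
  assume "\<not> ?thesis"
  then have nz: "\<And>z. z \<in> (X\<union>Y) - D \<Longrightarrow> bas (insert z (D - {e})) \<Longrightarrow> psi e \<le> psi z"
    by (meson not_le)
  define J where "J = D - {e}"
  have iD: "indep D" using bD bas_indep by blast
  have fD: "finite D" using iD indep_fin by blast
  have iJ: "indep J" using iD indep_mono J_def by blast
  have fJ: "finite J" using fD J_def by simp
  have fX: "finite X" using bX bas_fin by blast
  have cD: "card D = card X" using bas_card bD bX by blast
  have cJ: "card J = card D - 1" using J_def eD fD by simp
  have cD0: "card D > 0" using eD fD card_gt_0_iff by blast
  have top: "psi u = psi e" if u1: "u \<in> X \<union> Y" and u2: "u \<notin> J" and u3: "indep (insert u J)" for u
  proof (cases "u = e")
    case True then show ?thesis by simp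
  next
    case False
    then have uD: "u \<notin> D" using u2 J_def by blast
    have "card (insert u J) = card D" using uD J_def fJ cJ cD0 by simp
    then have "bas (insert u J)" using bas_by_card[OF bD u3] by simp
    then have "psi e \<le> psi u" using nz[of u] u1 uD J_def by blast
    moreover have "psi u \<le> psi e" using emax u1 uD SD by blast
    ultimately show ?thesis by simp
  qed
  have "card J < card Y" using cJ cD bas_card[OF bX bY] cD0 by simp
  then obtain y where y: "y \<in> Y - J" "indep (insert y J)" using aug iJ bY bas_indep by blast
  have yX: "y \<notin> X"
  proof
    assume "y \<in> X"
    then have "y \<in> D" using SD y by blast
    moreover have "y \<noteq> e" using eX y by blast
    ultimately show False using y J_def by blast
  qed
  define A where "A = {x \<in> X. x \<in> J \<or> \<not> indep (insert x J)}"
  have iA: "indep A" using indep_mono[OF bas_indep[OF bX]] A_def by auto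
  have "indep (insert y A)" using cl_trans[OF iJ iA _ _ y(2)] A_def y(1) by blast
  then obtain Z where Z: "bas Z" "insert y A \<subseteq> Z" "Z \<subseteq> insert y A \<union> X"
    using aug_basis bX by blast
  have cZ: "card Z = card X" using bas_card Z(1) bX by blast
  have "\<not> X \<subseteq> Z"
  proof
    assume "X \<subseteq> Z"
    then have "X = Z" using card_seteq[of Z X] Z(1) bas_fin cZ by auto
    then show False using Z(2) yX by blast
  qed
  then obtain x0 where x0: "x0 \<in> X" "x0 \<notin> Z" by blast
  have ZZ: "Z = insert y (X - {x0})"
  proof -
    have sub: "Z \<subseteq> insert y (X - {x0})" using Z(3) x0 A_def by blast
    have cX0: "card X > 0" using x0 fX card_gt_0_iff by blast
    have "card (insert y (X - {x0})) = card X" using yX x0 fX cX0 by simp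
    then show ?thesis using card_seteq[OF _ sub] fX cZ by simp
  qed
  have "x0 \<notin> A" using x0 Z(2) by blast
  then have "psi x0 = psi e" using top[of x0] x0 A_def by blast
  moreover have "psi y = psi e" using top[of y] y by blast
  ultimately have "sum psi Z = sum psi X" using ZZ sum_swap[OF fX x0(1), of y psi] yX by simp
  moreover have "X \<inter> Y \<subseteq> Z"
  proof
    fix s assume s: "s \<in> X \<inter> Y"
    then have "s \<in> J" using SD eX J_def by blast
    then show "s \<in> Z" using s Z(2) A_def by blast
  qed
  moreover have "Z \<subseteq> X \<union> Y" using ZZ y by blast
  ultimately have "Z = X" using uniq Z(1) by blast
  then show False using ZZ yX by blast
qed

lemma Yloc:
  fixes psi :: "'a \<Rightarrow> 'g::linordered_ab_group_add"
  assumes bX: "bas X" and bY: "bas Y"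
    and uniq: "\<forall>D. bas D \<and> X\<inter>Y \<subseteq> D \<and> D \<subseteq> X\<union>Y \<and> sum psi D = sum psi X \<longrightarrow> D = X"
    and eY: "e \<in> Y - X" and emax: "\<forall>u \<in> (X\<union>Y) - (X\<inter>Y). psi u \<le> psi e"
    and bD: "bas D" and SD: "X\<inter>Y \<subseteq> D" and DU: "D \<subseteq> X \<union> Y" and eD: "e \<notin> D"
  shows "\<exists>w \<in> D - (X\<inter>Y). psi w < psi e \<and> bas (insert e (D - {w}))"
proof (rule ccontr)
  assume "\<not> ?thesis"
  then have nw: "\<And>w. w \<in> D - (X\<inter>Y) \<Longrightarrow> bas (insert e (D - {w})) \<Longrightarrow> psi e \<le> psi w"
    by (meson not_le)
  define S where "S = X \<inter> Y"
  define C where "C = insert e {w \<in> D - S. indep (insert e (D - {w}))}"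
  have iD: "indep D" using bD bas_indep by blast
  have fD: "finite D" using iD indep_fin by blast
  have fX: "finite X" using bX bas_fin by blast
  have cD: "card D = card X" using bas_card bD bX by blast
  have swapcard: "card (insert e (D - {w})) = card D" if "w \<in> D" for w
  proof -
    have "card D > 0" using that fD card_gt_0_iff by blast
    then show ?thesis using that eD fD by simp
  qed
  have swapbas: "bas (insert e (D - {w}))" if w1: "w \<in> D" and w2: "indep (insert e (D - {w}))" for w
    using bas_by_card[OF bD w2] swapcard[OF w1] by simp
  have dep: "\<not> indep (C \<union> S)"
  proof
    assume ind: "indep (C \<union> S)"
    obtain Z where Z: "bas Z" "C \<union> S \<subseteq> Z" "Z \<subseteq> C \<union> S \<union> D" using aug_basis[OF ind bD] by blast
    have ZeD: "Z \<subseteq> insert e D" using Z(3) C_def SD S_def by blast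
    have eZ: "e \<in> Z" using Z(2) C_def by blast
    have cZ: "card Z = card D" using bas_card Z(1) bD by blast
    have "\<not> D \<subseteq> Z"
    proof
      assume "D \<subseteq> Z" then have "insert e D \<subseteq> Z" using eZ by blast
      then have "card (insert e D) \<le> card Z" using card_mono Z(1) bas_fin by blast
      then show False using cZ eD fD by simp
    qed
    then obtain w where w: "w \<in> D" "w \<notin> Z" by blast
    have sub: "Z \<subseteq> insert e (D - {w})" using ZeD w by blast
    have "Z = insert e (D - {w})" using card_seteq[OF _ sub] swapcard[OF w(1)] cZ fD by simp
    then have "indep (insert e (D - {w}))" using Z(1) bas_indep by simp
    moreover have "w \<notin> S" using w Z(2) by blast
    ultimately have "w \<in> C" using C_def w by blast
    then show False using w Z(2) by blast
  qed
  have CXY: "C \<subseteq> X \<union> Y" using C_def DU eY by blast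
  have "\<not> C \<subseteq> Y"
  proof
    assume "C \<subseteq> Y" then have "C \<union> S \<subseteq> Y" using S_def by blast
    then show False using dep indep_mono bY bas_indep by blast
  qed
  then obtain x0 where x0: "x0 \<in> C" "x0 \<in> X" using CXY by blast
  have x0e: "x0 \<noteq> e" using x0 eY by blast
  then have x0D: "x0 \<in> D - S" and x0i: "indep (insert e (D - {x0}))" using x0(1) C_def by auto
  define J where "J = X - {x0}"
  have iJ: "indep J" using indep_mono[OF bas_indep[OF bX]] J_def by blast
  have "\<exists>z \<in> C - X. indep (insert z J)"
  proof (rule ccontr)
    assume "\<not> ?thesis"
    then have ncl: "\<forall>z \<in> C - X. \<not> indep (insert z J)" by blast
    define A where "A = (C \<union> S) - {x0}"
    have "A \<subseteq> insert e (D - {x0})" using A_def C_def SD S_def by blast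
    then have iA: "indep A" using indep_mono x0i by blast
    have clA: "\<forall>a\<in>A. a \<in> J \<or> \<not> indep (insert a J)"
    proof
      fix a assume a: "a \<in> A"
      show "a \<in> J \<or> \<not> indep (insert a J)"
      proof (cases "a \<in> X")
        case True then show ?thesis using a A_def J_def by blast
      next
        case False
        then have "a \<in> C - X" using a A_def S_def by blast
        then show ?thesis using ncl by blast
      qed
    qed
    have xJ: "x0 \<notin> J" using J_def by blast
    have "insert x0 J = X" using x0(2) J_def by blast
    then have "indep (insert x0 J)" using bX bas_indep by simp
    then have "indep (insert x0 A)" using cl_trans[OF iJ iA clA xJ] by blast
    moreover have "insert x0 A = C \<union> S" using x0(1) A_def by blast
    ultimately show False using dep by simp
  qed
  then obtain z where z: "z \<in> C" "z \<notin> X" "indep (insert z J)" by blast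
  define Z where "Z = insert z J"
  have cX0: "card X > 0" using x0 fX card_gt_0_iff by blast
  have "card Z = card X" using Z_def J_def z(2) x0(2) fX cX0 by simp
  then have bZ: "bas Z" using bas_by_card[OF bX] z(3) Z_def by simp
  have "X \<inter> Y \<subseteq> Z" using Z_def J_def x0D S_def by blast
  moreover have "Z \<subseteq> X \<union> Y" using Z_def J_def z(1) CXY by blast
  moreover have "sum psi Z = sum psi X"
  proof -
    have pz: "psi z = psi e"
    proof (cases "z = e")
      case True then show ?thesis by simp
    next
      case False
      then have zD: "z \<in> D - S" and zi: "indep (insert e (D - {z}))" using z(1) C_def by auto
      have "psi e \<le> psi z" using nw[of z] zD swapbas[of z] zi S_def by blast
      moreover have "psi z \<le> psi e" using emax zD z(2) DU S_def by blast
      ultimately show ?thesis by simp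
    qed
    have px: "psi x0 = psi e"
    proof -
      have "psi e \<le> psi x0" using nw[of x0] x0D swapbas[of x0] x0i S_def by blast
      moreover have "psi x0 \<le> psi e" using emax x0D x0(2) S_def by blast
      ultimately show ?thesis by simp
    qed
    have "sum psi Z = sum psi X - psi x0 + psi z"
      using sum_swap[OF fX x0(2), of z psi] z(2) Z_def J_def by simp
    then show ?thesis using pz px by simp
  qed
  ultimately have "Z = X" using uniq bZ by blast
  then show False using Z_def z(2) by blast
qed

end


context mat begin

lemma cls_fin: "finite {D. bas D \<and> P D}"
proof -
  have "{D. bas D \<and> P D} \<subseteq> Pow E" using bas_indep indep_sub by blast
  then show ?thesis using finE finite_subset by blast
qed

lemma K:
  fixes psi :: "'a \<Rightarrow> 'g::linordered_ab_group_add"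
  shows "\<forall>X Y. bas X \<longrightarrow> bas Y \<longrightarrow> card (X - Y) = n \<longrightarrow>
    (\<forall>D. bas D \<and> X\<inter>Y \<subseteq> D \<and> D \<subseteq> X\<union>Y \<and> sum psi D = sum psi X \<longrightarrow> D = X) \<longrightarrow>
    n \<le> card ((\<lambda>D. sum psi D) ` {D. bas D \<and> X\<inter>Y \<subseteq> D \<and> D \<subseteq> X\<union>Y} - {sum psi X})"
proof (induction n)
  case 0 show ?case by simp
next
  case (Suc m)
  show ?case
  proof (intro allI impI)
    fix X Y assume bX: "bas X" and bY: "bas Y" and cXY: "card (X - Y) = Suc m"
      and uniq: "\<forall>D. bas D \<and> X\<inter>Y \<subseteq> D \<and> D \<subseteq> X\<union>Y \<and> sum psi D = sum psi X \<longrightarrow> D = X"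
    define cl where "cl = (\<lambda>Z. {D. bas D \<and> X\<inter>Z \<subseteq> D \<and> D \<subseteq> X\<union>Z})"
    define vl where "vl = (\<lambda>Z. (\<lambda>D. sum psi D) ` cl Z - {sum psi X})"
    have fvl: "finite (vl Z)" for Z using cls_fin vl_def cl_def by simp
    have fX: "finite X" using bX bas_fin by blast
    have fY: "finite Y" using bY bas_fin by blast
    have cXYeq: "card X = card Y" using bas_card bX bY by blast
    define R where "R = (X \<union> Y) - (X \<inter> Y)"
    have fR: "finite R" unfolding R_def using fX fY by simp
    have "X - Y \<noteq> {}" using cXY by (metis card.empty nat.distinct(1))
    then have Rne: "R \<noteq> {}" unfolding R_def by blast
    obtain e where eR: "e \<in> R" and emax0: "\<forall>u\<in>R. psi u \<le> psi e"
    proof -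
      have "Max (psi ` R) \<in> psi ` R" using fR Rne by simp
      then obtain e where "e \<in> R" "psi e = Max (psi ` R)" by auto
      moreover have "\<forall>u\<in>R. psi u \<le> Max (psi ` R)" using fR by simp
      ultimately show ?thesis using that by auto
    qed
    have emax: "\<forall>u \<in> (X\<union>Y) - (X\<inter>Y). psi u \<le> psi e" using emax0 unfolding R_def .
    have Xcl: "X \<in> cl Z" for Z unfolding cl_def using bX by blast
    show "Suc m \<le> card ((\<lambda>D. sum psi D) ` {D. bas D \<and> X\<inter>Y \<subseteq> D \<and> D \<subseteq> X\<union>Y} - {sum psi X})"
    proof (cases "e \<in> X")
      case True
      then have eXY: "e \<in> X - Y" using eR unfolding R_def by blast
      have iI: "indep (insert e (X \<inter> Y))" by (rule indep_mono[OF bas_indep[OF bX]]) (use True in blast)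
      obtain Z where Z: "bas Z" "insert e (X \<inter> Y) \<subseteq> Z" "Z \<subseteq> insert e (X \<inter> Y) \<union> Y"
        using aug_basis[OF iI bY] by blast
      have XZ: "X \<inter> Z = insert e (X \<inter> Y)" using Z True by auto
      have XZU: "X \<union> Z \<subseteq> X \<union> Y" using Z True by auto
      have "X - Z = (X - Y) - {e}" using XZ by blast
      then have cXZ: "card (X - Z) = m" using cXY eXY by simp
      have clsub: "cl Z \<subseteq> cl Y" unfolding cl_def using XZ XZU by blast
      have uniqZ: "\<forall>D. bas D \<and> X\<inter>Z \<subseteq> D \<and> D \<subseteq> X\<union>Z \<and> sum psi D = sum psi X \<longrightarrow> D = X"
      proof (intro allI impI)
        fix D assume DD: "bas D \<and> X\<inter>Z \<subseteq> D \<and> D \<subseteq> X\<union>Z \<and> sum psi D = sum psi X"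
        then have "D \<in> cl Z" unfolding cl_def by blast
        then have "D \<in> cl Y" using clsub by blast
        then show "D = X" using uniq DD unfolding cl_def by blast
      qed
      have IH: "m \<le> card (vl Z)" unfolding vl_def cl_def using mp[OF mp[OF mp[OF mp[OF spec[OF spec[OF Suc.IH, of X], of Z] bX] Z(1)] cXZ] uniqZ] .
      have fcl: "finite (cl Z)" using cls_fin cl_def by simp
      have clne: "cl Z \<noteq> {}" using Xcl by blast
      obtain D0 where D0: "D0 \<in> cl Z" and D0min: "\<forall>D\<in>cl Z. sum psi D0 \<le> sum psi D"
      proof -
        have "Min ((\<lambda>D. sum psi D) ` cl Z) \<in> (\<lambda>D. sum psi D) ` cl Z" using fcl clne by simp
        then obtain D0 where "D0 \<in> cl Z" "sum psi D0 = Min ((\<lambda>D. sum psi D) ` cl Z)" by auto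
        moreover have "\<forall>D\<in>cl Z. Min ((\<lambda>D. sum psi D) ` cl Z) \<le> sum psi D" using fcl by simp
        ultimately show ?thesis using that by auto
      qed
      have bD0: "bas D0" and SD0: "X \<inter> Y \<subseteq> D0" and D0U: "D0 \<subseteq> X \<union> Y" and eD0: "e \<in> D0"
        using D0[unfolded cl_def] XZ XZU by auto
      obtain z where z: "z \<in> (X\<union>Y) - D0" "psi z < psi e" "bas (insert z (D0 - {e}))"
        using Xloc[OF bX bY uniq eXY emax bD0 SD0 D0U eD0] by blast
      define D' where "D' = insert z (D0 - {e})"
      have D'cl: "D' \<in> cl Y" unfolding cl_def D'_def using z(1,3) SD0 D0U eXY by blast
      have fD0: "finite D0" using bD0 bas_fin by blast
      have "sum psi D' = sum psi D0 - psi e + psi z" using sum_swap[OF fD0 eD0, of z psi] z(1) D'_def by simp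
      then have lt: "sum psi D' < sum psi D0" using z(2) by simp
      define v where "v = sum psi D'"
      have vnot: "v \<notin> vl Z"
      proof
        assume "v \<in> vl Z"
        then obtain D where "D \<in> cl Z" "v = sum psi D" unfolding vl_def by auto
        then show False using D0min lt v_def by force
      qed
      have vX: "v \<noteq> sum psi X" using D0min Xcl lt v_def by force
      have "insert v (vl Z) \<subseteq> vl Y" unfolding vl_def using clsub D'cl vX v_def by auto
      then have "card (insert v (vl Z)) \<le> card (vl Y)" using card_mono fvl by blast
      then have "Suc m \<le> card (vl Y)" using IH vnot fvl by simp
      then show ?thesis unfolding vl_def cl_def .
    next
      case False
      then have eYX: "e \<in> Y - X" using eR unfolding R_def by blast
      have iYe: "indep (Y - {e})" using indep_mono[OF bas_indep[OF bY]] by blast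
      obtain Z where Z: "bas Z" "Y - {e} \<subseteq> Z" "Z \<subseteq> (Y - {e}) \<union> X"
        using aug_basis[OF iYe bX] by blast
      have cZ: "card Z = card Y" using bas_card Z(1) bY by blast
      have cYe: "card (Y - {e}) = card Y - 1" using eYX fY by simp
      have cY0: "card Y > 0" using eYX fY card_gt_0_iff by blast
      have "\<not> Z \<subseteq> Y - {e}"
      proof
        assume "Z \<subseteq> Y - {e}"
        then have "card Z \<le> card (Y - {e})" using card_mono fY by blast
        then show False using cZ cYe cY0 by simp
      qed
      then obtain x' where x': "x' \<in> Z" "x' \<notin> Y - {e}" by blast
      have x'X: "x' \<in> X" using x' Z(3) by blast
      have x'Y: "x' \<notin> Y" using x' x'X False by blast
      have ZZ: "Z = insert x' (Y - {e})"
      proof -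
        have sub: "insert x' (Y - {e}) \<subseteq> Z" using x' Z(2) by blast
        have "card (insert x' (Y - {e})) = card Y" using x'Y cYe cY0 fY by simp
        then show ?thesis using card_seteq[OF _ sub] Z(1) bas_fin cZ by simp
      qed
      have XZ: "X \<inter> Z = insert x' (X \<inter> Y)" using ZZ x'X False by blast
      have XZU: "X \<union> Z \<subseteq> X \<union> Y" using ZZ x'X by auto
      have eXZ: "e \<notin> X \<union> Z" using ZZ False x'X by auto
      have "X - Z = (X - Y) - {x'}" using XZ by blast
      then have cXZ: "card (X - Z) = m" using cXY x'X x'Y by simp
      have clsub: "cl Z \<subseteq> cl Y" unfolding cl_def using XZ XZU by blast
      have uniqZ: "\<forall>D. bas D \<and> X\<inter>Z \<subseteq> D \<and> D \<subseteq> X\<union>Z \<and> sum psi D = sum psi X \<longrightarrow> D = X"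
      proof (intro allI impI)
        fix D assume DD: "bas D \<and> X\<inter>Z \<subseteq> D \<and> D \<subseteq> X\<union>Z \<and> sum psi D = sum psi X"
        then have "D \<in> cl Z" unfolding cl_def by blast
        then have "D \<in> cl Y" using clsub by blast
        then show "D = X" using uniq DD unfolding cl_def by blast
      qed
      have IH: "m \<le> card (vl Z)" unfolding vl_def cl_def using mp[OF mp[OF mp[OF mp[OF spec[OF spec[OF Suc.IH, of X], of Z] bX] Z(1)] cXZ] uniqZ] .
      have fcl: "finite (cl Z)" using cls_fin cl_def by simp
      have clne: "cl Z \<noteq> {}" using Xcl by blast
      obtain D1 where D1: "D1 \<in> cl Z" and D1max: "\<forall>D\<in>cl Z. sum psi D \<le> sum psi D1"
      proof -
        have "Max ((\<lambda>D. sum psi D) ` cl Z) \<in> (\<lambda>D. sum psi D) ` cl Z" using fcl clne by simp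
        then obtain D1 where "D1 \<in> cl Z" "sum psi D1 = Max ((\<lambda>D. sum psi D) ` cl Z)" by auto
        moreover have "\<forall>D\<in>cl Z. sum psi D \<le> Max ((\<lambda>D. sum psi D) ` cl Z)" using fcl by simp
        ultimately show ?thesis using that by auto
      qed
      have bD1: "bas D1" and SD1: "X \<inter> Y \<subseteq> D1" and D1U: "D1 \<subseteq> X \<union> Y" and eD1: "e \<notin> D1"
        using D1[unfolded cl_def] XZ XZU eXZ by auto
      obtain w where w: "w \<in> D1 - (X\<inter>Y)" "psi w < psi e" "bas (insert e (D1 - {w}))"
        using Yloc[OF bX bY uniq eYX emax bD1 SD1 D1U eD1] by blast
      define D' where "D' = insert e (D1 - {w})"
      have D'cl: "D' \<in> cl Y" unfolding cl_def D'_def using w SD1 D1U eYX by blast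
      have fD1: "finite D1" using bD1 bas_fin by blast
      have "sum psi D' = sum psi D1 - psi w + psi e"
        using sum_swap[of D1 w e psi] fD1 w(1) eD1 D'_def by simp
      then have lt: "sum psi D1 < sum psi D'" using w(2) by simp
      define v where "v = sum psi D'"
      have vnot: "v \<notin> vl Z"
      proof
        assume "v \<in> vl Z"
        then obtain D where "D \<in> cl Z" "v = sum psi D" unfolding vl_def by auto
        then show False using D1max lt v_def by force
      qed
      have vX: "v \<noteq> sum psi X" using D1max Xcl lt v_def by force
      have "insert v (vl Z) \<subseteq> vl Y" unfolding vl_def using clsub D'cl vX v_def by auto
      then have "card (insert v (vl Z)) \<le> card (vl Y)" using card_mono fvl by blast
      then have "Suc m \<le> card (vl Y)" using IH vnot fvl by simp
      then show ?thesis unfolding vl_def cl_def .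
    qed
  qed
qed

end

theorem theorem5p5:
  fixes E :: "'a set" and indep :: "'a set \<Rightarrow> bool"
    and psi :: "'a \<Rightarrow> 'g::linordered_ab_group_add"
    and F :: "'g set" and B :: "'a set"
  assumes "matroid E indep"
    and "finite F"
    and "basis E indep B"
    and "\<exists>B'. basis E indep B' \<and> avoiding psi F B'"
  shows "\<exists>Bs. basis E indep Bs \<and> avoiding psi F Bs \<and> card (Bs - B) \<le> card F"
proof -
  interpret mat E indep using assms(1) by unfold_locales
  let ?P = "\<lambda>B'. basis E indep B' \<and> avoiding psi F B'"
  obtain B0 where B0: "?P B0" using assms(4) by blast
  obtain X where X: "?P X" and Xmin: "\<And>D. ?P D \<Longrightarrow> card (X - B) \<le> card (D - B)"
    using ex_has_least_nat[of ?P B0 "\<lambda>D. card (D - B)"] B0 by blast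
  have bX: "bas X" using X by blast
  have bB: "bas B" using assms(3) by blast
  define cl where "cl = {D. bas D \<and> X\<inter>B \<subseteq> D \<and> D \<subseteq> X\<union>B}"
  have fX: "finite X" using bX bas_fin by blast
  have less: "card (D - B) < card (X - B)" if D: "D \<in> cl" and DX: "D \<noteq> X" for D
  proof -
    have bD: "bas D" and D1: "X\<inter>B \<subseteq> D" and D2: "D \<subseteq> X\<union>B" using D unfolding cl_def by auto
    have sub: "D - B \<subseteq> X - B" using D2 by blast
    have "D - B \<noteq> X - B"
    proof
      assume eq: "D - B = X - B"
      have XD: "X \<subseteq> D"
      proof
        fix x assume x: "x \<in> X"
        show "x \<in> D"
        proof (cases "x \<in> B")
          case True then show ?thesis using x D1 by blast
        next
          case False then have "x \<in> X - B" using x by blast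
          then show ?thesis using eq by blast
        qed
      qed
      have "card D = card X" using bas_card bD bX by blast
      then have "X = D" using card_seteq[OF bas_fin[OF bD] XD] by simp
      then show False using DX by simp
    qed
    then have "D - B \<subset> X - B" using sub by blast
    then show ?thesis using psubset_card_mono fX by blast
  qed
  have inF: "sum psi D \<in> F" if D: "D \<in> cl" and DX: "D \<noteq> X" for D
  proof -
    have bD: "bas D" using D unfolding cl_def by blast
    have "\<not> ?P D" using less[OF D DX] Xmin by force
    then have "\<not> avoiding psi F D" using bD by blast
    then show ?thesis unfolding avoiding_def by simp
  qed
  have Xn: "sum psi X \<notin> F" using X unfolding avoiding_def by blast
  have uniq: "\<forall>D. bas D \<and> X\<inter>B \<subseteq> D \<and> D \<subseteq> X\<union>B \<and> sum psi D = sum psi X \<longrightarrow> D = X"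
  proof (intro allI impI)
    fix D assume DD: "bas D \<and> X\<inter>B \<subseteq> D \<and> D \<subseteq> X\<union>B \<and> sum psi D = sum psi X"
    then have Dc: "D \<in> cl" unfolding cl_def by blast
    show "D = X"
    proof (rule ccontr)
      assume "D \<noteq> X"
      then have "sum psi D \<in> F" using inF Dc by blast
      then show False using DD Xn by simp
    qed
  qed
  have K1: "card (X - B) \<le> card ((\<lambda>D. sum psi D) ` cl - {sum psi X})"
    unfolding cl_def using mp[OF mp[OF mp[OF mp[OF spec[OF spec[OF K[of "card (X - B)" psi], of X], of B] bX] bB] refl] uniq] .
  have "(\<lambda>D. sum psi D) ` cl - {sum psi X} \<subseteq> F"
  proof
    fix v assume "v \<in> (\<lambda>D. sum psi D) ` cl - {sum psi X}"
    then obtain D where D: "D \<in> cl" "v = sum psi D" "v \<noteq> sum psi X" by blast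
    then have "D \<noteq> X" by blast
    then show "v \<in> F" using inF D by blast
  qed
  then have "card ((\<lambda>D. sum psi D) ` cl - {sum psi X}) \<le> card F" using card_mono[OF assms(2)] by blast
  then have "card (X - B) \<le> card F" using K1 by linarith
  then show ?thesis using X by blast
qed

end
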